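(* Let $(X,d)$ be a complete Busemann convex geodesic metric space which is uniformly convex with a modulus of uniform convexity $\delta_X$ that is monotone or lower semicontinuous from the right. Let $(A,B)$ be a closed convex pair of subsets of $X$ with $B$ bounded, and let $T:A\cup B\to A\cup B$ be a noncyclic relatively nonexpansive mapping. Let $$A_0=\{x\in A : d(x,y')=\operatorname{dist}(A,B)\text{ for some } y'\in B\},$$ let $x_0\in A_0$ and define $x_{n+1}=\tfrac{x_n+Tx_n}{2}$ (the midpoint of $x_n$ and $Tx_n$) for every $n\ge 0$. Then $\lim_{n\to\infty} d(x_n,Tx_n)=0$. Moreover, if $T(A)\subseteq C$ for some compact set $C\subseteq X$, then $\{x_n\}$ converges to a fixed point of $T$.
   Context: $\operatorname{dist}(A,B)=\inf\{d(x,y):x\in A,y\in B\}$. A geodesic space is one in which any two points are joined by a geodesic segment; a subset is convex if it contains every geodesic segment joining two of its points. $X$ is Busemann convex if for any geodesics $c_1:[0,l_1]\to X$, $c_2:[0,l_2]\to X$, $d(c_1(tl_1),c_2(tl_2))\le (1-t)d(c_1(0),c_2(0))+t\,d(c_1(l_1),c_2(l_2))$ for all $t\in[0,1]$; such spaces are uniquely geodesic, so the midpoint $\tfrac{x+y}{2}$ (the point $m$ with $d(x,m)=d(m,y)=d(x,y)/2$) is unique. $X$ is uniformly convex if for every $r>0$ and $\varepsilon\in(0,2]$ there is $\delta\in(0,1]$ such that for all $a,x,y$ with $d(x,a)\le r$, $d(y,a)\le r$, $d(x,y)\ge\varepsilon r$, the midpoint $m$ of $x,y$ satisfies $d(m,a)\le(1-\delta)r$;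 a function $\delta_X(r,\varepsilon)$ providing such $\delta$ is a modulus of uniform convexity; it is monotone if it is decreasing in $r$ for each fixed $\varepsilon$, and lower semicontinuous from the right if it is lower semicontinuous from the right in $r$ for each fixed $\varepsilon$. $T$ is relatively nonexpansive if $d(Tx,Ty)\le d(x,y)$ for all $x\in A$, $y\in B$, and noncyclic if $T(A)\subseteq A$, $T(B)\subseteq B$. *)

theory Defs
  imports "HOL-Analysis.Analysis"
begin

definition is_geodesic :: "(real \<Rightarrow> 'a::metric_space) \<Rightarrow> real \<Rightarrow> bool" where
  "is_geodesic c l \<longleftrightarrow> 0 \<le> l \<and>
     (\<forall>s\<in>{0..l}. \<forall>t\<in>{0..l}. dist (c s) (c t) = \<bar>s - t\<bar>)"

definition geodesic_joining :: "(real \<Rightarrow> 'a::metric_space) \<Rightarrow> real \<Rightarrow> 'a \<Rightarrow> 'a \<Rightarrow> bool" where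
  "geodesic_joining c l x y \<longleftrightarrow> is_geodesic c l \<and> c 0 = x \<and> c l = y"

definition geodesic_space :: "'a::metric_space itself \<Rightarrow> bool" where
  "geodesic_space _ \<longleftrightarrow> (\<forall>x y::'a. \<exists>c l. geodesic_joining c l x y)"

definition geod_convex :: "'a::metric_space set \<Rightarrow> bool" where
  "geod_convex S \<longleftrightarrow> (\<forall>x\<in>S. \<forall>y\<in>S. \<forall>c l. geodesic_joining c l x y \<longrightarrow> c ` {0..l} \<subseteq> S)"

definition busemann_convex :: "'a::metric_space itself \<Rightarrow> bool" where
  "busemann_convex _ \<longleftrightarrow>
     (\<forall>(c1::real \<Rightarrow> 'a) l1 (c2::real \<Rightarrow> 'a) l2. is_geodesic c1 l1 \<longrightarrow> is_geodesic c2 l2 \<longrightarrow>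
        (\<forall>t\<in>{0..1}. dist (c1 (t * l1)) (c2 (t * l2))
            \<le> (1 - t) * dist (c1 0) (c2 0) + t * dist (c1 l1) (c2 l2)))"

text \<open>The (unique, in a Busemann convex geodesic space) midpoint of x and y.\<close>
definition gmid :: "'a::metric_space \<Rightarrow> 'a \<Rightarrow> 'a" where
  "gmid x y = (THE m. dist x m = dist x y / 2 \<and> dist m y = dist x y / 2)"

definition modulus_uc :: "'a::metric_space itself \<Rightarrow> (real \<Rightarrow> real \<Rightarrow> real) \<Rightarrow> bool" where
  "modulus_uc _ \<delta> \<longleftrightarrow>
     (\<forall>r>0. \<forall>\<epsilon>\<in>{0<..2}. 0 < \<delta> r \<epsilon> \<and> \<delta> r \<epsilon> \<le> 1 \<and>
        (\<forall>a x y::'a. dist x a \<le> r \<longrightarrow> dist y a \<le> r \<longrightarrow> dist x y \<ge> \<epsilon> * r \<longrightarrow>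
           dist (gmid x y) a \<le> (1 - \<delta> r \<epsilon>) * r))"

definition modulus_monotone :: "(real \<Rightarrow> real \<Rightarrow> real) \<Rightarrow> bool" where
  "modulus_monotone \<delta> \<longleftrightarrow>
     (\<forall>\<epsilon>\<in>{0<..2}. \<forall>r1 r2. 0 < r1 \<longrightarrow> r1 \<le> r2 \<longrightarrow> \<delta> r2 \<epsilon> \<le> \<delta> r1 \<epsilon>)"

definition modulus_lsc_right :: "(real \<Rightarrow> real \<Rightarrow> real) \<Rightarrow> bool" where
  "modulus_lsc_right \<delta> \<longleftrightarrow>
     (\<forall>\<epsilon>\<in>{0<..2}. \<forall>r>0. \<forall>e>0. \<exists>\<eta>>0. \<forall>s. r \<le> s \<and> s < r + \<eta> \<longrightarrow> \<delta> r \<epsilon> - e < \<delta> s \<epsilon>)"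

definition rel_nonexpansive :: "('a::metric_space \<Rightarrow> 'a) \<Rightarrow> 'a set \<Rightarrow> 'a set \<Rightarrow> bool" where
  "rel_nonexpansive T A B \<longleftrightarrow> (\<forall>x\<in>A. \<forall>y\<in>B. dist (T x) (T y) \<le> dist x y)"

definition noncyclic :: "('a \<Rightarrow> 'a) \<Rightarrow> 'a set \<Rightarrow> 'a set \<Rightarrow> bool" where
  "noncyclic T A B \<longleftrightarrow> T ` A \<subseteq> A \<and> T ` B \<subseteq> B"

definition proximal_part :: "'a::metric_space set \<Rightarrow> 'a set \<Rightarrow> 'a set" where
  "proximal_part A B = {x\<in>A. \<exists>y\<in>B. dist x y = setdist A B}"

end

theory Submission
  imports Defs
begin

lemma geo_len: "is_geodesic c l \<Longrightarrow> dist (c 0) (c l) = l"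
  unfolding is_geodesic_def by auto

lemma geo_concat:
  assumes g1: "is_geodesic c1 l1" and g2: "is_geodesic c2 l2" and e: "c1 l1 = c2 0"
    and d: "dist (c1 0) (c2 l2) = l1 + l2"
  shows "is_geodesic (\<lambda>s. if s \<le> l1 then c1 s else c2 (s - l1)) (l1 + l2)"
proof -
  have l1: "0 \<le> l1" and l2: "0 \<le> l2" using g1 g2 by (auto simp: is_geodesic_def)
  have G1: "\<And>s t. s\<in>{0..l1} \<Longrightarrow> t\<in>{0..l1} \<Longrightarrow> dist (c1 s) (c1 t) = \<bar>s - t\<bar>"
    using g1 by (auto simp: is_geodesic_def)
  have G2: "\<And>s t. s\<in>{0..l2} \<Longrightarrow> t\<in>{0..l2} \<Longrightarrow> dist (c2 s) (c2 t) = \<bar>s - t\<bar>"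
    using g2 by (auto simp: is_geodesic_def)
  have mixed: "dist (c1 s) (c2 (t - l1)) = t - s" if "0 \<le> s" "s \<le> l1" "l1 < t" "t \<le> l1 + l2" for s t
  proof (rule antisym)
    have "dist (c1 s) (c2 (t - l1)) \<le> dist (c1 s) (c1 l1) + dist (c2 0) (c2 (t - l1))"
      using dist_triangle[of "c1 s" "c2 (t - l1)" "c1 l1"] e by simp
    also have "\<dots> = (l1 - s) + (t - l1)" using G1[of s l1] G2[of 0 "t - l1"] that l1 by auto
    finally show "dist (c1 s) (c2 (t - l1)) \<le> t - s" by simp
  next
    have "l1 + l2 \<le> dist (c1 0) (c1 s) + dist (c1 s) (c2 (t - l1)) + dist (c2 (t - l1)) (c2 l2)"
      using d dist_triangle[of "c1 0" "c2 l2" "c1 s"] dist_triangle[of "c1 s" "c2 l2" "c2 (t - l1)"] by linarith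
    also have "\<dots> = s + dist (c1 s) (c2 (t - l1)) + (l2 - (t - l1))"
      using G1[of 0 s] G2[of "t - l1" l2] that l1 by auto
    finally show "t - s \<le> dist (c1 s) (c2 (t - l1))" by simp
  qed
  show ?thesis unfolding is_geodesic_def
  proof (intro conjI ballI)
    show "0 \<le> l1 + l2" using l1 l2 by simp
  next
    fix s t assume s: "s \<in> {0..l1+l2}" and t: "t \<in> {0..l1+l2}"
    show "dist (if s \<le> l1 then c1 s else c2 (s - l1)) (if t \<le> l1 then c1 t else c2 (t - l1)) = \<bar>s - t\<bar>"
    proof (cases "s \<le> l1"; cases "t \<le> l1")
      assume "s \<le> l1" "t \<le> l1" thus ?thesis using G1[of s t] s t by auto
    next
      assume "s \<le> l1" "\<not> t \<le> l1" thus ?thesis using mixed[of s t] s t by auto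
    next
      assume "\<not> s \<le> l1" "t \<le> l1" thus ?thesis using mixed[of t s] s t by (auto simp: dist_commute)
    next
      assume "\<not> s \<le> l1" "\<not> t \<le> l1" thus ?thesis using G2[of "s - l1" "t - l1"] s t by auto
    qed
  qed
qed

lemma busemann_half:
  assumes bc: "busemann_convex TYPE('a::metric_space)"
    and g1: "is_geodesic (c1::real \<Rightarrow> 'a) l1" and g2: "is_geodesic c2 l2"
  shows "dist (c1 (l1/2)) (c2 (l2/2)) \<le> (dist (c1 0) (c2 0) + dist (c1 l1) (c2 l2)) / 2"
proof -
  have H: "\<forall>t\<in>{0..1}. dist (c1 (t * l1)) (c2 (t * l2)) \<le> (1 - t) * dist (c1 0) (c2 0) + t * dist (c1 l1) (c2 l2)"
    using bc g1 g2 unfolding busemann_convex_def by blast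
  have "dist (c1 ((1/2) * l1)) (c2 ((1/2) * l2)) \<le> (1 - 1/2) * dist (c1 0) (c2 0) + (1/2) * dist (c1 l1) (c2 l2)"
    by (rule bspec[OF H]) simp
  thus ?thesis by (simp add: field_simps)
qed

lemma mid_char:
  assumes gs: "geodesic_space TYPE('a::metric_space)" and bc: "busemann_convex TYPE('a)"
    and gj: "geodesic_joining (c::real \<Rightarrow> 'a) l a b"
  shows "gmid a b = c (l/2)"
proof -
  have g: "is_geodesic c l" and c0: "c 0 = a" and cl: "c l = b" using gj by (auto simp: geodesic_joining_def)
  have l: "l = dist a b" using geo_len[OF g] c0 cl by simp
  have l0: "0 \<le> l" using g by (auto simp: is_geodesic_def)
  have G: "\<And>s t. s\<in>{0..l} \<Longrightarrow> t\<in>{0..l} \<Longrightarrow> dist (c s) (c t) = \<bar>s - t\<bar>"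
    using g by (auto simp: is_geodesic_def)
  have P: "dist a (c (l/2)) = dist a b / 2 \<and> dist (c (l/2)) b = dist a b / 2"
    using G[of 0 "l/2"] G[of "l/2" l] l0 c0 cl l by auto
  show ?thesis unfolding gmid_def
  proof (rule the_equality)
    show "dist a (c (l/2)) = dist a b / 2 \<and> dist (c (l/2)) b = dist a b / 2" by (rule P)
  next
    fix m assume m: "dist a m = dist a b / 2 \<and> dist m b = dist a b / 2"
    obtain g1 k1 where j1: "geodesic_joining (g1::real\<Rightarrow>'a) k1 a m" using gs unfolding geodesic_space_def by blast
    obtain g2 k2 where j2: "geodesic_joining (g2::real\<Rightarrow>'a) k2 m b" using gs unfolding geodesic_space_def by blast
    have gg1: "is_geodesic g1 k1" "g1 0 = a" "g1 k1 = m" using j1 by (auto simp: geodesic_joining_def)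
    have gg2: "is_geodesic g2 k2" "g2 0 = m" "g2 k2 = b" using j2 by (auto simp: geodesic_joining_def)
    have k1: "k1 = l/2" using geo_len[OF gg1(1)] gg1 m l by simp
    have k2: "k2 = l/2" using geo_len[OF gg2(1)] gg2 m l by simp
    define cc where "cc = (\<lambda>s. if s \<le> k1 then g1 s else g2 (s - k1))"
    have e1: "g1 k1 = g2 0" using gg1 gg2 by simp
    have e2': "dist (g1 0) (g2 k2) = dist a b" using gg1(2) gg2(3) by simp
    have e2: "dist (g1 0) (g2 k2) = k1 + k2" using e2' k1 k2 l by linarith
    have gc: "is_geodesic cc (k1 + k2)" unfolding cc_def
      by (rule geo_concat[OF gg1(1) gg2(1) e1 e2])
    have kk: "k1 + k2 = l" using k1 k2 by simp
    have "dist (c (l/2)) (cc (l/2)) \<le> (dist (c 0) (cc 0) + dist (c l) (cc l)) / 2"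
      using busemann_half[OF bc g, of cc l] gc kk by simp
    moreover have "cc 0 = a" using gg1 k1 l0 by (simp add: cc_def)
    moreover have "cc l = b"
    proof (cases "l \<le> k1")
      case True
      hence "l = 0" "k1 = 0" using k1 l0 by auto
      hence "a = b" using l by simp
      thus ?thesis using True gg1 \<open>l = 0\<close> by (simp add: cc_def)
    next
      case False
      have "l - k1 = k2" using k1 k2 by simp
      thus ?thesis using False gg2 by (simp add: cc_def)
    qed
    moreover have "cc (l/2) = m" using gg1 k1 by (simp add: cc_def)
    ultimately show "m = c (l/2)" using c0 cl by simp
  qed
qed

lemma gmid_ex:
  assumes gs: "geodesic_space TYPE('a::metric_space)"
  obtains c l where "geodesic_joining (c::real \<Rightarrow> 'a) l a b"
  using gs unfolding geodesic_space_def by blast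

lemma gmid_dist:
  assumes gs: "geodesic_space TYPE('a::metric_space)" and bc: "busemann_convex TYPE('a)"
  shows "dist a (gmid a b) = dist a b / 2" "dist (gmid a b) (b::'a) = dist a b / 2"
proof -
  obtain c l where gj: "geodesic_joining (c::real \<Rightarrow> 'a) l a b" using gmid_ex[OF gs] by blast
  have g: "is_geodesic c l" and c0: "c 0 = a" and cl: "c l = b" using gj by (auto simp: geodesic_joining_def)
  have l: "l = dist a b" using geo_len[OF g] c0 cl by simp
  have l0: "0 \<le> l" using g by (auto simp: is_geodesic_def)
  have G: "\<And>s t. s\<in>{0..l} \<Longrightarrow> t\<in>{0..l} \<Longrightarrow> dist (c s) (c t) = \<bar>s - t\<bar>"
    using g by (auto simp: is_geodesic_def)
  have m: "gmid a b = c (l/2)" by (rule mid_char[OF gs bc gj])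
  have 1: "dist (c 0) (c (l/2)) = \<bar>0 - l/2\<bar>" by (rule G) (use l0 in auto)
  have 2: "dist (c (l/2)) (c l) = \<bar>l/2 - l\<bar>" by (rule G) (use l0 in auto)
  show "dist a (gmid a b) = dist a b / 2" using 1 m c0 l l0 by simp
  show "dist (gmid a b) (b::'a) = dist a b / 2" using 2 m cl l l0 by simp
qed

lemma gmid_in:
  assumes gs: "geodesic_space TYPE('a::metric_space)" and bc: "busemann_convex TYPE('a)"
    and S: "geod_convex S" and a: "a \<in> S" and b: "(b::'a) \<in> S"
  shows "gmid a b \<in> S"
proof -
  obtain c l where gj: "geodesic_joining (c::real \<Rightarrow> 'a) l a b" using gmid_ex[OF gs] by blast
  have l0: "0 \<le> l" using gj by (simp add: is_geodesic_def geodesic_joining_def)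
  have "c ` {0..l} \<subseteq> S" using S a b gj unfolding geod_convex_def by blast
  moreover have "l/2 \<in> {0..l}" using l0 by simp
  ultimately have "c (l/2) \<in> S" by blast
  thus ?thesis using mid_char[OF gs bc gj] by simp
qed

lemma gmid_busemann:
  assumes gs: "geodesic_space TYPE('a::metric_space)" and bc: "busemann_convex TYPE('a)"
  shows "dist (gmid a b) (gmid a' (b'::'a)) \<le> (dist a a' + dist b b') / 2"
proof -
  obtain c l where gj: "geodesic_joining (c::real \<Rightarrow> 'a) l a b" using gmid_ex[OF gs] by blast
  obtain c' l' where gj': "geodesic_joining (c'::real \<Rightarrow> 'a) l' a' b'" using gmid_ex[OF gs] by blast
  have g: "is_geodesic c l" and c0: "c 0 = a" and cl: "c l = b" using gj by (auto simp: geodesic_joining_def)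
  have g': "is_geodesic c' l'" and c0': "c' 0 = a'" and cl': "c' l' = b'" using gj' by (auto simp: geodesic_joining_def)
  have "dist (c (l/2)) (c' (l'/2)) \<le> (dist (c 0) (c' 0) + dist (c l) (c' l')) / 2"
    by (rule busemann_half[OF bc g g'])
  thus ?thesis using mid_char[OF gs bc gj] mid_char[OF gs bc gj'] c0 cl c0' cl' by simp
qed

lemma gmid_same: "gmid w w = w"
proof -
  have "(\<lambda>m. dist w m = dist w w / 2 \<and> dist m w = dist w w / 2) = (\<lambda>m. m = w)"
    by (auto simp: fun_eq_iff)
  thus ?thesis unfolding gmid_def by simp
qed

lemma uc_unif:
  assumes uc: "modulus_uc TYPE('a::metric_space) \<delta>" and mon: "modulus_monotone \<delta> \<or> modulus_lsc_right \<delta>"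
    and r: "r > 0" and e: "\<epsilon> > 0"
  shows "\<exists>\<eta>>0. \<exists>c>0. \<forall>(a::'a) u v s. r \<le> s \<longrightarrow> s < r + \<eta> \<longrightarrow> dist u a \<le> s \<longrightarrow> dist v a \<le> s
           \<longrightarrow> \<epsilon> \<le> dist u v \<longrightarrow> dist (gmid u v) a \<le> s - c"
proof -
  define e' where "e' = min 2 (\<epsilon> / (r + 1))"
  have e'01: "e' \<in> {0<..2}" using r e by (auto simp: e'_def)
  have UC: "\<And>s. s > 0 \<Longrightarrow> 0 < \<delta> s e' \<and> \<delta> s e' \<le> 1 \<and>
        (\<forall>a x y::'a. dist x a \<le> s \<longrightarrow> dist y a \<le> s \<longrightarrow> dist x y \<ge> e' * s \<longrightarrow>
           dist (gmid x y) a \<le> (1 - \<delta> s e') * s)"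
    using uc e'01 unfolding modulus_uc_def by blast
  have es: "e' * s \<le> \<epsilon>" if "0 < s" "s < r + 1" for s
  proof -
    have "e' * s \<le> (\<epsilon> / (r + 1)) * s" using that by (intro mult_right_mono) (auto simp: e'_def)
    also have "\<dots> \<le> (\<epsilon> / (r + 1)) * (r + 1)" using that e r by (intro mult_left_mono) auto
    also have "\<dots> = \<epsilon>" using r by simp
    finally show ?thesis .
  qed
  obtain \<eta> k where \<eta>: "\<eta> > 0" "\<eta> \<le> 1" and k: "k > 0"
    and dk: "\<And>s. r \<le> s \<Longrightarrow> s < r + \<eta> \<Longrightarrow> k \<le> \<delta> s e'"
  proof (cases "modulus_monotone \<delta>")
    case True
    have "\<delta> (r + 1) e' \<le> \<delta> s e'" if "r \<le> s" "s < r + 1" for s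
      using True e'01 that r unfolding modulus_monotone_def by auto
    moreover have "0 < \<delta> (r + 1) e'" using UC[of "r+1"] r by auto
    ultimately show ?thesis using that[of 1 "\<delta> (r + 1) e'"] by auto
  next
    case False
    hence lsc: "modulus_lsc_right \<delta>" using mon by blast
    have dpos: "0 < \<delta> r e'" using UC[OF r] by auto
    have L: "\<forall>r>0. \<forall>e>0. \<exists>\<eta>>0. \<forall>s. r \<le> s \<and> s < r + \<eta> \<longrightarrow> \<delta> r e' - e < \<delta> s e'"
      using lsc e'01 unfolding modulus_lsc_right_def by blast
    have "\<exists>\<eta>>0. \<forall>s. r \<le> s \<and> s < r + \<eta> \<longrightarrow> \<delta> r e' - \<delta> r e' / 2 < \<delta> s e'"
      using L r dpos half_gt_zero[OF dpos] by blast
    then obtain \<eta>0 where \<eta>0: "\<eta>0 > 0" "\<And>s. r \<le> s \<and> s < r + \<eta>0 \<Longrightarrow> \<delta> r e' - \<delta> r e' / 2 < \<delta> s e'"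
      by blast
    show ?thesis
      by (rule that[of "min \<eta>0 1" "\<delta> r e' / 2"]) (use \<eta>0 dpos in \<open>auto intro: less_imp_le\<close>)
  qed
  have kr: "k * r > 0" using k r by simp
  have main: "\<forall>(a::'a) u v s. r \<le> s \<longrightarrow> s < r + \<eta> \<longrightarrow> dist u a \<le> s \<longrightarrow> dist v a \<le> s
           \<longrightarrow> \<epsilon> \<le> dist u v \<longrightarrow> dist (gmid u v) a \<le> s - k * r"
  proof (intro allI impI)
    fix a u v :: 'a and s
    assume rs: "r \<le> s" "s < r + \<eta>" and du: "dist u a \<le> s" and dv: "dist v a \<le> s" and uv: "\<epsilon> \<le> dist u v"
    have s0: "s > 0" using rs r by simp
    have "e' * s \<le> dist u v" using es[of s] s0 rs \<eta> uv by simp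
    hence "dist (gmid u v) a \<le> (1 - \<delta> s e') * s" using UC[OF s0] du dv by blast
    also have "\<dots> = s - \<delta> s e' * s" by (simp add: algebra_simps)
    also have "\<dots> \<le> s - k * r"
    proof -
      have "k * r \<le> \<delta> s e' * s" using dk[OF rs] k r rs by (intro mult_mono) auto
      thus ?thesis by simp
    qed
    finally show "dist (gmid u v) a \<le> s - k * r" .
  qed
  show ?thesis using \<eta>(1) kr main by blast
qed

lemma uc_strict:
  assumes uc: "modulus_uc TYPE('a::metric_space) \<delta>" and r: "r > 0"
    and du: "dist u a \<le> r" and dv: "dist v a \<le> r" and ne: "u \<noteq> (v::'a)"
  shows "dist (gmid u v) a < r"
proof -
  define e where "e = min 2 (dist u v / r)"
  have e: "e \<in> {0<..2}" using ne r by (auto simp: e_def)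
  have "e * r \<le> dist u v" using r by (auto simp: e_def min_def field_simps)
  hence "dist (gmid u v) a \<le> (1 - \<delta> r e) * r" and "0 < \<delta> r e"
    using uc e r du dv unfolding modulus_uc_def by blast+
  moreover have "0 < \<delta> r e * r" using \<open>0 < \<delta> r e\<close> r by simp
  ultimately show ?thesis by (simp add: algebra_simps)
qed

lemma unique_near:
  assumes gs: "geodesic_space TYPE('a::metric_space)" and bc: "busemann_convex TYPE('a)"
    and uc: "modulus_uc TYPE('a) \<delta>"
    and S: "geod_convex S" and u: "u \<in> S" and v: "v \<in> S" and low: "\<forall>w\<in>S. D \<le> dist w a"
    and du: "dist u a \<le> D" and dv: "dist v a \<le> D" and D: "0 \<le> D"
  shows "u = (v::'a)"
proof (cases "D = 0")
  case True thus ?thesis using du dv by simp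
next
  case False
  hence Dp: "D > 0" using D by simp
  show ?thesis
  proof (rule ccontr)
    assume "u \<noteq> v"
    hence "dist (gmid u v) a < D" using uc_strict[OF uc Dp du dv] by blast
    moreover have "gmid u v \<in> S" using gmid_in[OF gs bc S u v] .
    ultimately show False using low by fastforce
  qed
qed


lemma uc_seq:
  assumes uc: "modulus_uc TYPE('a::metric_space) \<delta>" and mon: "modulus_monotone \<delta> \<or> modulus_lsc_right \<delta>"
    and rL: "r \<longlonglongrightarrow> L" and Lr: "\<And>n. L \<le> r n"
    and du: "\<And>n. dist (u n) a \<le> r n" and dv: "\<And>n. dist (v n) (a::'a) \<le> r n"
    and g: "(\<lambda>n. dist (gmid (u n) (v n)) a) \<longlonglongrightarrow> L"
  shows "(\<lambda>n. dist (u n) (v n)) \<longlonglongrightarrow> 0"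
proof -
  have L0: "0 \<le> L" by (rule LIMSEQ_le_const[OF g]) simp
  show ?thesis
  proof (cases "L = 0")
    case True
    have h: "(\<lambda>n. 2 * r n) \<longlonglongrightarrow> 2 * L" by (intro tendsto_intros rL)
    show ?thesis
    proof (rule tendsto_sandwich[of "\<lambda>n. 0" _ _ "\<lambda>n. 2 * r n"])
      show "\<forall>\<^sub>F n in sequentially. 0 \<le> dist (u n) (v n)" by simp
      show "\<forall>\<^sub>F n in sequentially. dist (u n) (v n) \<le> 2 * r n"
      proof (rule always_eventually, rule allI)
        fix n show "dist (u n) (v n) \<le> 2 * r n" using dist_triangle2[of "u n" "v n" a] du[of n] dv[of n] by linarith
      qed
      show "(\<lambda>n. 0) \<longlonglongrightarrow> (0::real)" by simp
      show "(\<lambda>n. 2 * r n) \<longlonglongrightarrow> 0" using h True by simp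
    qed
  next
    case False
    hence Lp: "L > 0" using L0 by simp
    show ?thesis unfolding tendsto_iff
    proof (intro allI impI)
      fix \<epsilon> :: real assume e: "\<epsilon> > 0"
      obtain \<eta> c where \<eta>: "\<eta> > 0" and c: "c > 0" and H: "\<forall>(a::'a) u v s. L \<le> s \<longrightarrow> s < L + \<eta> \<longrightarrow> dist u a \<le> s \<longrightarrow> dist v a \<le> s
           \<longrightarrow> \<epsilon> \<le> dist u v \<longrightarrow> dist (gmid u v) a \<le> s - c"
        using uc_unif[OF uc mon Lp e] by blast
      have ev1: "\<forall>\<^sub>F n in sequentially. dist (r n) L < \<eta>" using rL \<eta> unfolding tendsto_iff by blast
      have rg: "(\<lambda>n. r n - dist (gmid (u n) (v n)) a) \<longlonglongrightarrow> L - L" by (intro tendsto_intros rL g)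
      have ev2: "\<forall>\<^sub>F n in sequentially. dist (r n - dist (gmid (u n) (v n)) a) 0 < c"
        using rg c unfolding tendsto_iff by simp
      show "\<forall>\<^sub>F n in sequentially. dist (dist (u n) (v n)) 0 < \<epsilon>"
        using ev1 ev2
      proof eventually_elim
        case (elim n)
        have "\<not> \<epsilon> \<le> dist (u n) (v n)"
        proof
          assume "\<epsilon> \<le> dist (u n) (v n)"
          moreover have "r n < L + \<eta>" using elim(1) by (simp add: dist_real_def)
          ultimately have "dist (gmid (u n) (v n)) a \<le> r n - c" using H Lr[of n] du[of n] dv[of n] by blast
          thus False using elim(2) by (simp add: dist_real_def)
        qed
        thus ?case by simp
      qed
    qed
  qed
qed

lemma min_conv:
  assumes gs: "geodesic_space TYPE('a::complete_space)" and bc: "busemann_convex TYPE('a)"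
    and cl: "closed B" and cv: "geod_convex B" and ne: "B \<noteq> {}"
    and F0: "\<And>z. z\<in>B \<Longrightarrow> 0 \<le> F z"
    and Flip: "\<And>z z'. z\<in>B \<Longrightarrow> z'\<in>B \<Longrightarrow> F z \<le> F z' + dist z z'"
    and Ftri: "\<And>z z'. z\<in>B \<Longrightarrow> z'\<in>B \<Longrightarrow> dist z z' \<le> F z + F z'"
    and Fuc: "\<And>r \<epsilon>. r > 0 \<Longrightarrow> \<epsilon> > 0 \<Longrightarrow> \<exists>\<eta>>0. \<exists>c>0. \<forall>z\<in>B. \<forall>z'\<in>B. \<forall>s. r \<le> s \<longrightarrow> s < r + \<eta> \<longrightarrow>
              F z \<le> s \<longrightarrow> F z' \<le> s \<longrightarrow> \<epsilon> \<le> dist z z' \<longrightarrow> F (gmid z z') \<le> s - c"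
  shows "\<exists>q\<in>B. (\<forall>z\<in>B. F q \<le> F z) \<and> (\<forall>z\<in>B. F z \<le> F q \<longrightarrow> z = (q::'a))"
proof -
  define \<rho> where "\<rho> = Inf (F ` B)"
  have bdd: "bdd_below (F ` B)" by (rule bdd_belowI2[of _ 0]) (rule F0)
  have low: "\<And>z. z \<in> B \<Longrightarrow> \<rho> \<le> F z" unfolding \<rho>_def using bdd by (auto intro: cInf_lower)
  have \<rho>0: "0 \<le> \<rho>" unfolding \<rho>_def using ne F0 by (auto intro: cInf_greatest)
  have approx: "\<exists>z\<in>B. F z < \<rho> + \<theta>" if "\<theta> > 0" for \<theta>
  proof -
    have "Inf (F ` B) < \<rho> + \<theta>" using that by (simp add: \<rho>_def)
    thus ?thesis using cInf_less_iff[of "F ` B"] ne bdd by auto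
  qed
  have K: "\<exists>\<eta>>0. \<forall>z\<in>B. \<forall>z'\<in>B. F z < \<rho> + \<eta> \<longrightarrow> F z' < \<rho> + \<eta> \<longrightarrow> dist z z' < \<epsilon>" if e: "\<epsilon> > 0" for \<epsilon>
  proof (cases "\<rho> = 0")
    case True
    show ?thesis
    proof (intro exI[of _ "\<epsilon>/2"] conjI ballI impI)
      show "\<epsilon>/2 > 0" using e by simp
      fix z z' assume "z \<in> B" "z' \<in> B" "F z < \<rho> + \<epsilon>/2" "F z' < \<rho> + \<epsilon>/2"
      thus "dist z z' < \<epsilon>" using Ftri[of z z'] True by linarith
    qed
  next
    case False
    hence rp: "\<rho> > 0" using \<rho>0 by simp
    obtain \<eta> c where \<eta>: "\<eta> > 0" and c: "c > 0" and H: "\<forall>z\<in>B. \<forall>z'\<in>B. \<forall>s. \<rho> \<le> s \<longrightarrow> s < \<rho> + \<eta> \<longrightarrow>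
              F z \<le> s \<longrightarrow> F z' \<le> s \<longrightarrow> \<epsilon> \<le> dist z z' \<longrightarrow> F (gmid z z') \<le> s - c"
      using Fuc[OF rp e] by blast
    show ?thesis
    proof (intro exI[of _ "min \<eta> c"] conjI ballI impI)
      show "min \<eta> c > 0" using \<eta> c by simp
      fix z z' assume z: "z \<in> B" and z': "z' \<in> B" and Fz: "F z < \<rho> + min \<eta> c" and Fz': "F z' < \<rho> + min \<eta> c"
      show "dist z z' < \<epsilon>"
      proof (rule ccontr)
        assume "\<not> dist z z' < \<epsilon>"
        hence d: "\<epsilon> \<le> dist z z'" by simp
        define s where "s = max (F z) (F z')"
        have s1: "\<rho> \<le> s" using low[OF z] by (simp add: s_def)
        have m1: "min \<eta> c \<le> \<eta>" "min \<eta> c \<le> c" by auto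
        have s2: "s < \<rho> + \<eta>" using Fz Fz' m1 by (auto simp: s_def)
        have s3: "F z \<le> s" "F z' \<le> s" by (auto simp: s_def)
        have "F (gmid z z') \<le> s - c" using H z z' s1 s2 s3 d by blast
        moreover have "s - c < \<rho>" using Fz Fz' m1 by (auto simp: s_def)
        moreover have "\<rho> \<le> F (gmid z z')" using low gmid_in[OF gs bc cv z z'] by blast
        ultimately show False by linarith
      qed
    qed
  qed
  have "\<forall>k. \<exists>z. z \<in> B \<and> F z < \<rho> + inverse (real (Suc k))"
  proof
    fix k :: nat
    have "inverse (real (Suc k)) > 0" by simp
    thus "\<exists>z. z \<in> B \<and> F z < \<rho> + inverse (real (Suc k))" using approx by blast
  qed
  hence "\<exists>zs. \<forall>k. zs k \<in> B \<and> F (zs k) < \<rho> + inverse (real (Suc k))" by (rule choice)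
  then obtain zs where zs: "\<forall>k. zs k \<in> B \<and> F (zs k) < \<rho> + inverse (real (Suc k))" by blast
  have zsB: "\<And>k. zs k \<in> B" and zsF: "\<And>k. F (zs k) < \<rho> + inverse (real (Suc k))" using zs by auto
  have inv: "\<exists>N. \<forall>k\<ge>N. inverse (real (Suc k)) < \<theta>" if th: "\<theta> > 0" for \<theta>
  proof -
    obtain N where N: "inverse (real (Suc N)) < \<theta>" using reals_Archimedean[OF th] by auto
    have "inverse (real (Suc k)) < \<theta>" if "k \<ge> N" for k
    proof -
      have "inverse (real (Suc k)) \<le> inverse (real (Suc N))" using that by (intro le_imp_inverse_le) auto
      thus ?thesis using N by linarith
    qed
    thus ?thesis by blast
  qed
  have "Cauchy zs"
  proof (rule metric_CauchyI)
    fix \<epsilon> :: real assume "0 < \<epsilon>"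
    then obtain \<eta> where \<eta>: "\<eta> > 0" and H: "\<forall>z\<in>B. \<forall>z'\<in>B. F z < \<rho> + \<eta> \<longrightarrow> F z' < \<rho> + \<eta> \<longrightarrow> dist z z' < \<epsilon>"
      using K by blast
    obtain N where N: "\<forall>k\<ge>N. inverse (real (Suc k)) < \<eta>" using inv[OF \<eta>] by blast
    show "\<exists>M. \<forall>m\<ge>M. \<forall>n\<ge>M. dist (zs m) (zs n) < \<epsilon>"
    proof (intro exI[of _ N] allI impI)
      fix m n assume "m \<ge> N" "n \<ge> N"
      hence "inverse (real (Suc m)) < \<eta>" "inverse (real (Suc n)) < \<eta>" using N by blast+
      hence "F (zs m) < \<rho> + \<eta>" "F (zs n) < \<rho> + \<eta>" using zsF[of m] zsF[of n] by linarith+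
      thus "dist (zs m) (zs n) < \<epsilon>" using H zsB by blast
    qed
  qed
  then obtain q where q: "zs \<longlonglongrightarrow> q" using Cauchy_convergent convergent_def by blast
  have qB: "q \<in> B" using closed_sequentially[OF cl zsB q] .
  have Fq: "F q \<le> \<rho>"
  proof (rule field_le_epsilon)
    fix e :: real assume e: "0 < e"
    have e2: "e/2 > 0" using e by simp
    have "\<forall>\<^sub>F k in sequentially. dist (zs k) q < e/2" using q e2 unfolding tendsto_iff by blast
    then obtain N1 where N1: "\<forall>k\<ge>N1. dist (zs k) q < e/2" unfolding eventually_sequentially by blast
    obtain N2 where N2: "\<forall>k\<ge>N2. inverse (real (Suc k)) < e/2" using inv[of "e/2"] e by auto
    define k where "k = max N1 N2"
    have "F q \<le> F (zs k) + dist q (zs k)" using Flip[OF qB zsB] .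
    moreover have "dist q (zs k) < e/2" using N1 by (simp add: k_def dist_commute)
    moreover have "F (zs k) < \<rho> + e/2"
    proof -
      have "k \<ge> N2" by (simp add: k_def)
      hence "inverse (real (Suc k)) < e/2" using N2 by blast
      thus ?thesis using zsF[of k] by linarith
    qed
    ultimately show "F q \<le> \<rho> + e" by linarith
  qed
  hence Fqe: "F q = \<rho>" using low[OF qB] by simp
  have P1: "\<forall>z\<in>B. F q \<le> F z" using low Fqe by auto
  have P2: "\<forall>z\<in>B. F z \<le> F q \<longrightarrow> z = q"
  proof (intro ballI impI)
    fix z assume z: "z \<in> B" and Fz: "F z \<le> F q"
    show "z = q"
    proof (rule ccontr)
      assume "z \<noteq> q"
      hence dz: "dist z q > 0" by simp
      obtain \<eta> where \<eta>: "\<eta> > 0" and H: "\<forall>w\<in>B. \<forall>w'\<in>B. F w < \<rho> + \<eta> \<longrightarrow> F w' < \<rho> + \<eta> \<longrightarrow> dist w w' < dist z q"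
        using K[OF dz] by blast
      have f1: "F z < \<rho> + \<eta>" "F q < \<rho> + \<eta>" using Fz Fqe \<eta> by linarith+
      have "dist z q < dist z q" using H z qB f1 by blast
      thus False by simp
    qed
  qed
  show ?thesis using qB P1 P2 by blast
qed


theorem mainTheorem7:
  fixes A B :: "'a::complete_space set"
    and T :: "'a \<Rightarrow> 'a"
    and \<delta> :: "real \<Rightarrow> real \<Rightarrow> real"
    and x :: "nat \<Rightarrow> 'a"
  assumes "geodesic_space TYPE('a)"
    and "busemann_convex TYPE('a)"
    and "modulus_uc TYPE('a) \<delta>"
    and "modulus_monotone \<delta> \<or> modulus_lsc_right \<delta>"
    and "closed A" and "closed B" and "geod_convex A" and "geod_convex B"
    and "bounded B"
    and "T ` (A \<union> B) \<subseteq> A \<union> B"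
    and "noncyclic T A B" and "rel_nonexpansive T A B"
    and "x 0 \<in> proximal_part A B"
    and "\<And>n. x (Suc n) = gmid (x n) (T (x n))"
  shows "(\<lambda>n. dist (x n) (T (x n))) \<longlonglongrightarrow> 0 \<and>
         (\<forall>C. compact C \<and> T ` A \<subseteq> C \<longrightarrow>
            (\<exists>p. p \<in> A \<union> B \<and> T p = p \<and> x \<longlonglongrightarrow> p))"
proof -
  note gs = assms(1) and bc = assms(2) and uc = assms(3) and mon = assms(4)
    and clA = assms(5) and clB = assms(6) and cvA = assms(7) and cvB = assms(8) and bdB = assms(9)
    and nc = assms(11) and rne = assms(12) and x0 = assms(13) and xs = assms(14)
  define D where "D = setdist A B"
  obtain y0 where y0B: "y0 \<in> B" and x0A: "x 0 \<in> A" and dy0: "dist (x 0) y0 = D"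
    using x0 unfolding proximal_part_def D_def by blast
  have D0: "0 \<le> D" unfolding D_def by simp
  have DAB: "\<And>a b. a \<in> A \<Longrightarrow> b \<in> B \<Longrightarrow> D \<le> dist a b" unfolding D_def by (rule setdist_le_dist)
  have TA: "\<And>a. a \<in> A \<Longrightarrow> T a \<in> A" and TB: "\<And>b. b \<in> B \<Longrightarrow> T b \<in> B"
    using nc unfolding noncyclic_def by auto
  have TT: "\<And>a b. a \<in> A \<Longrightarrow> b \<in> B \<Longrightarrow> dist (T a) (T b) \<le> dist a b"
    using rne unfolding rel_nonexpansive_def by blast
  have mid_pt: "\<And>u v (w::'a). dist (gmid u v) w \<le> (dist u w + dist v w) / 2"
  proof -
    fix u v w :: 'a
    have "dist (gmid u v) (gmid w w) \<le> (dist u w + dist v w) / 2" by (rule gmid_busemann[OF gs bc])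
    thus "dist (gmid u v) w \<le> (dist u w + dist v w) / 2" by (simp add: gmid_same)
  qed
  have xA: "\<And>n. x n \<in> A"
  proof -
    fix n show "x n \<in> A"
    proof (induction n)
      case 0 show ?case by (rule x0A)
    next
      case (Suc n) thus ?case using xs[of n] gmid_in[OF gs bc cvA Suc TA[OF Suc]] by simp
    qed
  qed
  define y where "y = (\<lambda>n. ((\<lambda>z. gmid z (T z)) ^^ n) y0)"
  have y_0: "y 0 = y0" and ys: "\<And>n. y (Suc n) = gmid (y n) (T (y n))" by (simp_all add: y_def)
  have yB: "\<And>n. y n \<in> B"
  proof -
    fix n show "y n \<in> B"
    proof (induction n)
      case 0 show ?case using y_0 y0B by simp
    next
      case (Suc n) thus ?case using ys[of n] gmid_in[OF gs bc cvB Suc TB[OF Suc]] by simp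
    qed
  qed
  have dxy: "\<And>n. dist (x n) (y n) \<le> D"
  proof -
    fix n show "dist (x n) (y n) \<le> D"
    proof (induction n)
      case 0 show ?case using y_0 dy0 by simp
    next
      case (Suc n)
      have "dist (x (Suc n)) (y (Suc n)) \<le> (dist (x n) (y n) + dist (T (x n)) (T (y n))) / 2"
        using xs[of n] ys[of n] gmid_busemann[OF gs bc] by simp
      also have "\<dots> \<le> dist (x n) (y n)" using TT[OF xA yB, of n n] by simp
      finally show ?case using Suc by simp
    qed
  qed
  obtain e where e: "\<forall>b\<in>B. dist y0 b \<le> e" using bdB bounded_any_center by blast
  have xbd: "\<And>n z. dist (x n) z \<le> D + e + dist y0 z"
  proof -
    fix n z
    have t1: "dist (x n) z \<le> dist (x n) (y n) + dist (y n) y0 + dist y0 z"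
      using dist_triangle[of "x n" z "y n"] dist_triangle[of "y n" z y0] by linarith
    have t2: "dist y0 (y n) \<le> e" using e yB[of n] by blast
    have t3: "dist (y n) y0 = dist y0 (y n)" by (rule dist_commute)
    show "dist (x n) z \<le> D + e + dist y0 z" using t1 t2 t3 dxy[of n] by linarith
  qed
  define S where "S z = {s. \<forall>\<^sub>F n in sequentially. dist (x n) z \<le> s}" for z
  define R where "R z = Inf (S z)" for z
  have Sne: "\<And>z. S z \<noteq> {}" unfolding S_def using xbd by (auto intro!: always_eventually)
  have Slow: "\<And>z s. s \<in> S z \<Longrightarrow> 0 \<le> s"
  proof -
    fix z s assume "s \<in> S z"
    then obtain N where "\<forall>n\<ge>N. dist (x n) z \<le> s" unfolding S_def eventually_sequentially by blast
    hence "dist (x N) z \<le> s" by simp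
    thus "0 \<le> s" using zero_le_dist[of "x N" z] by linarith
  qed
  have Sbdd: "\<And>z. bdd_below (S z)" using Slow by (meson bdd_belowI)
  have R0: "\<And>z. 0 \<le> R z" unfolding R_def using Sne Slow by (meson cInf_greatest)
  have R1: "\<And>z \<eta>. \<eta> > 0 \<Longrightarrow> \<forall>\<^sub>F n in sequentially. dist (x n) z \<le> R z + \<eta>"
  proof -
    fix z and \<eta> :: real assume "\<eta> > 0"
    hence "Inf (S z) < R z + \<eta>" by (simp add: R_def)
    then obtain s where "s \<in> S z" "s < R z + \<eta>" using cInf_less_iff[OF Sne Sbdd] by blast
    thus "\<forall>\<^sub>F n in sequentially. dist (x n) z \<le> R z + \<eta>" unfolding S_def
      by (auto elim: eventually_mono)
  qed
  have R2: "\<And>z s. \<forall>\<^sub>F n in sequentially. dist (x n) z \<le> s \<Longrightarrow> R z \<le> s"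
    unfolding R_def using Sbdd by (auto intro: cInf_lower simp: S_def)
  have Rlip: "R z \<le> R z' + dist z z'" for z z'
  proof (rule field_le_epsilon)
    fix \<theta> :: real assume "0 < \<theta>"
    have "\<forall>\<^sub>F n in sequentially. dist (x n) z \<le> R z' + dist z z' + \<theta>"
      using R1[OF \<open>0 < \<theta>\<close>, of z']
    proof eventually_elim
      case (elim n) thus ?case using dist_triangle[of "x n" z z'] by (simp add: dist_commute)
    qed
    thus "R z \<le> R z' + dist z z' + \<theta>" by (rule R2)
  qed
  have Rtri: "dist z z' \<le> R z + R z'" for z z'
  proof (rule field_le_epsilon)
    fix \<theta> :: real assume "0 < \<theta>"
    hence "\<theta>/2 > 0" by simp
    have "\<forall>\<^sub>F n in sequentially. dist (x n) z \<le> R z + \<theta>/2 \<and> dist (x n) z' \<le> R z' + \<theta>/2"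
      using R1[OF \<open>\<theta>/2 > 0\<close>, of z] R1[OF \<open>\<theta>/2 > 0\<close>, of z'] by (rule eventually_conj)
    then obtain N where "dist (x N) z \<le> R z + \<theta>/2" "dist (x N) z' \<le> R z' + \<theta>/2"
      unfolding eventually_sequentially by blast
    thus "dist z z' \<le> R z + R z' + \<theta>" using dist_triangle3[of z z' "x N"] by linarith
  qed
  have Ruc: "\<exists>\<eta>>0. \<exists>c>0. \<forall>z\<in>B. \<forall>z'\<in>B. \<forall>s. r \<le> s \<longrightarrow> s < r + \<eta> \<longrightarrow>
              R z \<le> s \<longrightarrow> R z' \<le> s \<longrightarrow> \<epsilon> \<le> dist z z' \<longrightarrow> R (gmid z z') \<le> s - c"
    if r: "r > 0" and ep: "\<epsilon> > 0" for r \<epsilon>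
  proof -
    obtain \<eta>0 c0 where \<eta>0: "\<eta>0 > 0" and c0: "c0 > 0" and H: "\<forall>(a::'a) u v s. r \<le> s \<longrightarrow> s < r + \<eta>0 \<longrightarrow> dist u a \<le> s \<longrightarrow> dist v a \<le> s
           \<longrightarrow> \<epsilon> \<le> dist u v \<longrightarrow> dist (gmid u v) a \<le> s - c0"
      using uc_unif[OF uc mon r ep] by blast
    define \<theta> where "\<theta> = min (\<eta>0/2) (c0/2)"
    have th: "\<theta> > 0" "\<theta> \<le> \<eta>0/2" "\<theta> \<le> c0/2" using \<eta>0 c0 by (auto simp: \<theta>_def)
    have main: "R (gmid z z') \<le> s - c0/2"
      if z: "z \<in> B" and z': "z' \<in> B" and s1: "r \<le> s" and s2: "s < r + \<eta>0/2" and Rz: "R z \<le> s" and Rz': "R z' \<le> s"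
        and d: "\<epsilon> \<le> dist z z'" for z z' s
    proof (rule R2)
      have "\<forall>\<^sub>F n in sequentially. dist (x n) z \<le> R z + \<theta> \<and> dist (x n) z' \<le> R z' + \<theta>"
        using R1[OF th(1), of z] R1[OF th(1), of z'] by (rule eventually_conj)
      thus "\<forall>\<^sub>F n in sequentially. dist (x n) (gmid z z') \<le> s - c0/2"
      proof eventually_elim
        case (elim n)
        have a1: "dist z (x n) \<le> s + \<theta>" "dist z' (x n) \<le> s + \<theta>" using elim Rz Rz' by (simp_all add: dist_commute)
        have a2: "r \<le> s + \<theta>" "s + \<theta> < r + \<eta>0" using s1 s2 th by linarith+
        have "dist (gmid z z') (x n) \<le> s + \<theta> - c0" using H a1 a2 d by blast
        thus ?case using th by (simp add: dist_commute)
      qed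
    qed
    show ?thesis
      by (rule exI[of _ "\<eta>0/2"], rule conjI, use \<eta>0 in simp, rule exI[of _ "c0/2"], rule conjI, use c0 in simp)
         (use main in blast)
  qed
  have Bne: "B \<noteq> {}" using y0B by blast
  obtain q where qB: "q \<in> B" and qmin: "\<forall>z\<in>B. R q \<le> R z" and quniq: "\<forall>z\<in>B. R z \<le> R q \<longrightarrow> z = q"
    using min_conv[OF gs bc clB cvB Bne, of R] R0 Rlip Rtri Ruc by blast
  have RT: "R (T q) \<le> R q"
  proof (rule field_le_epsilon)
    fix \<theta> :: real assume "0 < \<theta>"
    hence th: "\<theta>/2 > 0" by simp
    have "\<forall>\<^sub>F n in sequentially. dist (x n) (T q) \<le> R (T q) + \<theta>/2 \<and> dist (x n) q \<le> R q + \<theta>/2"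
      using R1[OF th, of "T q"] R1[OF th, of q] by (rule eventually_conj)
    hence "\<forall>\<^sub>F n in sequentially. dist (x (Suc n)) (T q) \<le> (R (T q) + R q + \<theta>) / 2"
    proof eventually_elim
      case (elim n)
      have "dist (x (Suc n)) (T q) \<le> (dist (x n) (T q) + dist (T (x n)) (T q)) / 2"
        using xs[of n] mid_pt by simp
      moreover have "dist (T (x n)) (T q) \<le> dist (x n) q" using TT[OF xA qB] .
      moreover have "dist (x n) (T q) \<le> R (T q) + \<theta>/2" "dist (x n) q \<le> R q + \<theta>/2" using elim by blast+
      ultimately show "dist (x (Suc n)) (T q) \<le> (R (T q) + R q + \<theta>) / 2" by (simp add: field_simps)
    qed
    hence "\<forall>\<^sub>F n in sequentially. dist (x n) (T q) \<le> (R (T q) + R q + \<theta>) / 2"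
      using eventually_sequentially_Suc[of "\<lambda>n. dist (x n) (T q) \<le> (R (T q) + R q + \<theta>) / 2"] by blast
    hence "R (T q) \<le> (R (T q) + R q + \<theta>) / 2" by (rule R2)
    thus "R (T q) \<le> R q + \<theta>" by (simp add: field_simps)
  qed
  have Tq: "T q = q" using quniq TB[OF qB] RT by blast
  define r where "r n = dist (x n) q" for n
  have rdec: "r (Suc n) \<le> r n" for n
  proof -
    have "r (Suc n) \<le> (dist (x n) q + dist (T (x n)) q) / 2" unfolding r_def using xs[of n] mid_pt by simp
    moreover have "dist (T (x n)) q \<le> dist (x n) q" using TT[OF xA qB, of n] Tq by simp
    ultimately show ?thesis unfolding r_def by (simp add: field_simps)
  qed
  have rdecs: "decseq r" by (rule decseq_SucI[of r]) (rule rdec)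
  obtain L where rL: "r \<longlonglongrightarrow> L" and Lr: "\<forall>i. L \<le> r i"
    using decseq_convergent[OF rdecs, of 0] by (auto simp: r_def)
  have part1: "(\<lambda>n. dist (x n) (T (x n))) \<longlonglongrightarrow> 0"
  proof (rule uc_seq[OF uc mon rL])
    show "\<And>n. L \<le> r n" using Lr by blast
    show "\<And>n. dist (x n) q \<le> r n" by (simp add: r_def)
    show "\<And>n. dist (T (x n)) q \<le> r n" using TT[OF xA qB] Tq by (simp add: r_def)
    show "(\<lambda>n. dist (gmid (x n) (T (x n))) q) \<longlonglongrightarrow> L" using LIMSEQ_Suc[OF rL] xs by (simp add: r_def)
  qed
  have part2: "\<exists>p. p \<in> A \<union> B \<and> T p = p \<and> x \<longlonglongrightarrow> p" if C: "compact C" "T ` A \<subseteq> C" for C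
  proof -
    have TxC: "\<And>n. T (x n) \<in> C" using C(2) xA by (simp add: image_subset_iff)
    have sc: "seq_compact C" by (rule compact_imp_seq_compact[OF C(1)])
    have TxC': "\<forall>n. (\<lambda>n. T (x n)) n \<in> C" using TxC by simp
    obtain p and l :: "nat \<Rightarrow> nat" where pC: "p \<in> C" and l: "strict_mono l" and Txl: "((\<lambda>n. T (x n)) \<circ> l) \<longlonglongrightarrow> p"
      by (rule seq_compactE[OF sc TxC'])
    have Txl': "(\<lambda>k. T (x (l k))) \<longlonglongrightarrow> p" using Txl by (simp add: o_def)
    have d1: "(\<lambda>k. dist (x (l k)) (T (x (l k)))) \<longlonglongrightarrow> 0"
      using LIMSEQ_subseq_LIMSEQ[OF part1 l] by (simp add: o_def)
    have d2: "(\<lambda>k. dist (T (x (l k))) p) \<longlonglongrightarrow> 0" by (rule tendsto_dist_iff[THEN iffD1, OF Txl'])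
    have xl: "(\<lambda>k. x (l k)) \<longlonglongrightarrow> p"
    proof (rule tendsto_dist_iff[THEN iffD2], rule tendsto_sandwich[of "\<lambda>k. 0" _ _ "\<lambda>k. dist (x (l k)) (T (x (l k))) + dist (T (x (l k))) p"])
      show "\<forall>\<^sub>F n in sequentially. 0 \<le> dist (x (l n)) p" by simp
      show "\<forall>\<^sub>F n in sequentially. dist (x (l n)) p \<le> dist (x (l n)) (T (x (l n))) + dist (T (x (l n))) p"
        by (rule always_eventually) (simp add: dist_triangle)
      show "(\<lambda>k. 0) \<longlonglongrightarrow> (0::real)" by simp
      show "(\<lambda>k. dist (x (l k)) (T (x (l k))) + dist (T (x (l k))) p) \<longlonglongrightarrow> 0"
        using tendsto_add[OF d1 d2] by simp
    qed
    have pA: "p \<in> A" using closed_sequentially[OF clA _ xl] xA by blast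
    obtain q' where q'B: "q' \<in> B" and q'min: "\<forall>z\<in>B. dist p q' \<le> dist p z"
    proof -
      have Fuc: "\<exists>\<eta>>0. \<exists>c>0. \<forall>z\<in>B. \<forall>z'\<in>B. \<forall>s. r \<le> s \<longrightarrow> s < r + \<eta> \<longrightarrow>
              dist p z \<le> s \<longrightarrow> dist p z' \<le> s \<longrightarrow> \<epsilon> \<le> dist z z' \<longrightarrow> dist p (gmid z z') \<le> s - c"
        if r: "r > 0" and ep: "\<epsilon> > 0" for r \<epsilon>
      proof -
        obtain \<eta>0 c0 where \<eta>0: "\<eta>0 > 0" and c0: "c0 > 0" and H: "\<forall>(a::'a) u v s. r \<le> s \<longrightarrow> s < r + \<eta>0 \<longrightarrow> dist u a \<le> s \<longrightarrow> dist v a \<le> s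
           \<longrightarrow> \<epsilon> \<le> dist u v \<longrightarrow> dist (gmid u v) a \<le> s - c0"
          using uc_unif[OF uc mon r ep] by blast
        have "\<forall>z\<in>B. \<forall>z'\<in>B. \<forall>s. r \<le> s \<longrightarrow> s < r + \<eta>0 \<longrightarrow>
              dist p z \<le> s \<longrightarrow> dist p z' \<le> s \<longrightarrow> \<epsilon> \<le> dist z z' \<longrightarrow> dist p (gmid z z') \<le> s - c0"
          using H by (simp add: dist_commute)
        thus ?thesis using \<eta>0 c0 by blast
      qed
      have "\<exists>q\<in>B. (\<forall>z\<in>B. dist p q \<le> dist p z) \<and> (\<forall>z\<in>B. dist p z \<le> dist p q \<longrightarrow> z = q)"
        apply (rule min_conv[OF gs bc clB cvB Bne, of "dist p"])
           apply simp
          apply (rule dist_triangle2)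
         apply (rule dist_triangle3)
        apply (rule Fuc; assumption)
        done
      thus ?thesis using that by blast
    qed
    have dpq: "dist p q' = D"
    proof (rule antisym)
      show "D \<le> dist p q'" using DAB[OF pA q'B] .
      show "dist p q' \<le> D"
      proof (rule field_le_epsilon)
        fix \<theta> :: real assume "0 < \<theta>"
        then obtain N where "\<forall>k\<ge>N. dist (x (l k)) p < \<theta>" using xl unfolding tendsto_iff eventually_sequentially by blast
        hence "dist (x (l N)) p < \<theta>" by simp
        moreover have "dist p q' \<le> dist p (y (l N))" using q'min yB by blast
        moreover have "dist p (y (l N)) \<le> dist p (x (l N)) + dist (x (l N)) (y (l N))" by (rule dist_triangle)
        moreover note dxy[of "l N"]
        ultimately show "dist p q' \<le> D + \<theta>" by (simp add: dist_commute)
      qed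
    qed
    have lowB: "\<forall>w\<in>B. D \<le> dist w p" using DAB[OF pA] by (simp add: dist_commute)
    have lowA: "\<forall>w\<in>A. D \<le> dist w q'" using DAB[OF _ q'B] by simp
    have Tq': "T q' = q'"
    proof -
      have "dist p (T q') \<le> dist p q'"
      proof (rule LIMSEQ_le)
        show "(\<lambda>k. dist (T (x (l k))) (T q')) \<longlonglongrightarrow> dist p (T q')" by (intro tendsto_intros Txl')
        show "(\<lambda>k. dist (x (l k)) q') \<longlonglongrightarrow> dist p q'" by (intro tendsto_intros xl)
        show "\<exists>N. \<forall>n\<ge>N. dist (T (x (l n))) (T q') \<le> dist (x (l n)) q'" using TT[OF xA q'B] by blast
      qed
      hence "dist (T q') p \<le> D" using dpq by (simp add: dist_commute)
      moreover have "dist q' p \<le> D" using dpq by (simp add: dist_commute)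
      ultimately show ?thesis using unique_near[OF gs bc uc cvB TB[OF q'B] q'B lowB _ _ D0] by blast
    qed
    have Tp: "T p = p"
    proof -
      have "dist (T p) q' \<le> D" using TT[OF pA q'B] Tq' dpq by simp
      moreover have "dist p q' \<le> D" using dpq by simp
      ultimately show ?thesis using unique_near[OF gs bc uc cvA TA[OF pA] pA lowA _ _ D0] by blast
    qed
    define r' where "r' n = dist (x n) q'" for n
    have rdec': "r' (Suc n) \<le> r' n" for n
    proof -
      have "r' (Suc n) \<le> (dist (x n) q' + dist (T (x n)) q') / 2" unfolding r'_def using xs[of n] mid_pt by simp
      moreover have "dist (T (x n)) q' \<le> dist (x n) q'" using TT[OF xA q'B, of n] Tq' by simp
      ultimately show ?thesis unfolding r'_def by (simp add: field_simps)
    qed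
    have rdecs': "decseq r'" by (rule decseq_SucI[of r']) (rule rdec')
    obtain L' where rL': "r' \<longlonglongrightarrow> L'"
      using decseq_convergent[OF rdecs', of 0] by (auto simp: r'_def)
    have "(r' \<circ> l) \<longlonglongrightarrow> L'" using LIMSEQ_subseq_LIMSEQ[OF rL' l] .
    moreover have "(r' \<circ> l) \<longlonglongrightarrow> D"
    proof -
      have "(\<lambda>k. dist (x (l k)) q') \<longlonglongrightarrow> dist p q'" by (rule tendsto_dist[OF xl tendsto_const])
      thus ?thesis using dpq by (simp add: o_def r'_def)
    qed
    ultimately have L'D: "L' = D" using LIMSEQ_unique by blast
    have conv: "(\<lambda>n. dist (x n) p) \<longlonglongrightarrow> 0"
    proof (rule uc_seq[OF uc mon rL'[unfolded L'D]])
      show "\<And>n. D \<le> r' n" using DAB[OF xA q'B] by (simp add: r'_def)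
      show "\<And>n. dist (x n) q' \<le> r' n" by (simp add: r'_def)
      show "\<And>n. dist p q' \<le> r' n" using DAB[OF xA q'B] dpq by (simp add: r'_def)
      show "(\<lambda>n. dist (gmid (x n) p) q') \<longlonglongrightarrow> D"
      proof (rule tendsto_sandwich[of "\<lambda>n. D" _ _ "\<lambda>n. (r' n + dist p q') / 2"])
        show "\<forall>\<^sub>F n in sequentially. D \<le> dist (gmid (x n) p) q'"
          using DAB[OF gmid_in[OF gs bc cvA xA pA] q'B] by simp
        show "\<forall>\<^sub>F n in sequentially. dist (gmid (x n) p) q' \<le> (r' n + dist p q') / 2"
          using mid_pt by (simp add: r'_def)
        show "(\<lambda>n. D) \<longlonglongrightarrow> D" by simp
        have "(\<lambda>n. (r' n + dist p q') / 2) \<longlonglongrightarrow> (D + dist p q') / 2"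
          using rL' L'D by (intro tendsto_intros) auto
        thus "(\<lambda>n. (r' n + dist p q') / 2) \<longlonglongrightarrow> D" using dpq by simp
      qed
    qed
    have "x \<longlonglongrightarrow> p" by (rule tendsto_dist_iff[THEN iffD2, OF conv])
    thus ?thesis using pA Tp by blast
  qed
  show ?thesis using part1 part2 by blast
qed


end
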